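(* Let $n\ge1$, let $d\ge1$ be a square-free integer and let $L(\mathbf{X})=\sum_{i,j=1}^n a_{ij}x_{ij}\in\mathbb{Z}[\mathbf{X}]$ be a linear form in the $n^2$ variables $\mathbf{X}=(x_{ij})_{i,j=1}^n$. Write $\gcd(L,d^2)=ef^2$, where $\gcd(L,d^2)$ is the greatest common divisor of $d^2$ and all coefficients $a_{ij}$, and $e,f$ are positive square-free integers with $\gcd(e,f)=1$. Define \[ S_{d^2}(L)=\sum_{\substack{\mathbf{X}\in\mathbb{Z}_{d^2}^{n\times n}\\ \det\mathbf{X}\equiv0 \bmod d^2}}\exp\left(2\pi i\,L(\mathbf{X})/d^2\right). \] Then \[ |S_{d^2}(L)|\le d^{2n^2-(n+3)/2+o(1)}\,e\,f^{(n+3)/2}, \] where $o(1)$ denotes a quantity tending to $0$ as $d\to\infty$, uniformly in $L$ (depending only on $n$).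
   Context: $\mathbb{Z}_{m}$ denotes the residue ring modulo $m$, represented by $\{0,\dots,m-1\}$. *)

theory Defs
  imports Complex_Main "Jordan_Normal_Form.Determinant" "HOL-Computational_Algebra.Squarefree"
begin

definition residue_matrices :: "nat \<Rightarrow> int \<Rightarrow> int mat set" where
  "residue_matrices n m = {X \<in> carrier_mat n n. \<forall>i<n. \<forall>j<n. X $$ (i,j) \<in> {0..<m}}"

definition linform :: "nat \<Rightarrow> int mat \<Rightarrow> int mat \<Rightarrow> int" where
  "linform n A X = (\<Sum>i<n. \<Sum>j<n. A $$ (i,j) * X $$ (i,j))"

definition gcd_form :: "nat \<Rightarrow> int mat \<Rightarrow> int \<Rightarrow> int" where
  "gcd_form n A m = Gcd (insert m {A $$ (i,j) | i j. i < n \<and> j < n})"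

definition S_sum :: "nat \<Rightarrow> nat \<Rightarrow> int mat \<Rightarrow> complex" where
  "S_sum n d A = (\<Sum>X \<in> {X \<in> residue_matrices n (int d ^ 2). det X mod (int d ^ 2) = 0}.
      exp (2 * of_real pi * \<i> * of_int (linform n A X) / of_int (int d ^ 2)))"

end

theory Submission
  imports Defs "HOL-Library.FuncSet" "HOL-Number_Theory.Cong"
begin

lemma one_dim:
  fixes M m c r :: int
  assumes M: "M > 0" and m: "m > 0" and mM: "m dvd M"
  shows "int (card {a \<in> {0..<M}. [c * a = r] (mod m)}) * m \<le> M * gcd c m"
proof -
  define h where "h = gcd c m"
  have h0: "h > 0" using m unfolding h_def by (simp add: gcd_pos_int)
  define m' where "m' = m div h"
  have mm': "m = m' * h" unfolding m'_def h_def by simp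
  have m'0: "m' > 0" using m h0 mm' by (simp add: zero_less_mult_iff)
  have m'M: "m' dvd M" using dvd_mult_left[of m' h M] mM mm' by simp
  then obtain t where t: "M = m' * t" by blast
  define Q where "Q = {a \<in> {0..<M}. [c * a = r] (mod m)}"
  have inj: "inj_on (\<lambda>a. a div m') Q"
  proof (rule inj_onI)
    fix a1 a2 assume a1: "a1 \<in> Q" and a2: "a2 \<in> Q" and eq: "a1 div m' = a2 div m'"
    have "(c * a1) mod m = (c * a2) mod m" using a1 a2 unfolding Q_def cong_def by auto
    hence "m dvd c * a1 - c * a2" by (simp add: mod_eq_dvd_iff)
    hence "m dvd c * (a1 - a2)" by (simp add: right_diff_distrib)
    then obtain q where q: "c * (a1 - a2) = m * q" by blast
    define c' where "c' = c div h"
    have cc': "c = c' * h" unfolding c'_def h_def by simp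
    have "(c' * (a1 - a2)) * h = (m' * q) * h" using q cc' mm' by (simp add: algebra_simps)
    hence "c' * (a1 - a2) = m' * q" using h0 by simp
    hence d: "m' dvd c' * (a1 - a2)" by simp
    have "coprime c' m'" unfolding c'_def m'_def h_def
      using div_gcd_coprime[of c m] m by simp
    hence "coprime m' c'" by (simp add: coprime_commute)
    hence "m' dvd (a1 - a2)" using d coprime_dvd_mult_right_iff by blast
    hence "a1 mod m' = a2 mod m'" by (simp add: mod_eq_dvd_iff)
    moreover have "a1 = a1 div m' * m' + a1 mod m'" "a2 = a2 div m' * m' + a2 mod m'" by simp_all
    ultimately show "a1 = a2" using eq by simp
  qed
  have img: "(\<lambda>a. a div m') ` Q \<subseteq> {0..<t}"
  proof
    fix b assume "b \<in> (\<lambda>a. a div m') ` Q"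
    then obtain a where a: "a \<in> Q" "b = a div m'" by blast
    have a0: "0 \<le> a" "a < M" using a unfolding Q_def by auto
    have "b \<ge> 0" using a0 m'0 a by (simp add: pos_imp_zdiv_nonneg_iff)
    moreover have "a div m' < t"
    proof -
      have e1: "a div m' * m' + a mod m' = a" by simp
      have e2: "a mod m' \<ge> 0" using m'0 by simp
      have e3: "t * m' = M" using t by (simp add: mult.commute)
      have "a div m' * m' < t * m'" using e1 e2 e3 a0 by linarith
      thus ?thesis using m'0 by simp
    qed
    ultimately show "b \<in> {0..<t}" using a by simp
  qed
  have "card Q = card ((\<lambda>a. a div m') ` Q)" using card_image[OF inj] by simp
  also have "\<dots> \<le> card {0..<t}" by (rule card_mono[OF _ img]) simp
  finally have "card Q \<le> nat t" by simp
  moreover have "t \<ge> 0" using t M m'0 by (metis less_le_not_le mult_pos_neg not_le)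
  ultimately have "int (card Q) \<le> t" by linarith
  hence "int (card Q) * m \<le> t * m" using m by simp
  also have "t * m = M * h" using t mm' by (simp add: algebra_simps)
  finally show ?thesis unfolding Q_def h_def .
qed


definition Vs :: "nat \<Rightarrow> int \<Rightarrow> (nat \<Rightarrow> int) set" where
  "Vs n M = PiE {..<n} (\<lambda>_. {0..<M})"

definition dotp :: "nat \<Rightarrow> (nat \<Rightarrow> int) \<Rightarrow> (nat \<Rightarrow> int) \<Rightarrow> int" where
  "dotp n c y = (\<Sum>i<n. c i * y i)"

lemma finite_Vs[simp]: "finite (Vs n M)"
  unfolding Vs_def by (simp add: finite_PiE)

lemma sum_PiE_insert:
  assumes "x \<notin> S"
  shows "sum h (PiE (insert x S) T) = (\<Sum>a \<in> T x. \<Sum>g \<in> PiE S T. h (g(x := a)))"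
proof -
  have "sum h (PiE (insert x S) T) = sum h ((\<lambda>(y, g). g(x := y)) ` (T x \<times> Pi\<^sub>E S T))"
    by (simp add: PiE_insert_eq)
  also have "\<dots> = sum (h \<circ> (\<lambda>(y, g). g(x := y))) (T x \<times> Pi\<^sub>E S T)"
    by (rule sum.reindex[OF inj_combinator[OF assms]])
  also have "\<dots> = (\<Sum>a \<in> T x. \<Sum>g \<in> PiE S T. h (g(x := a)))"
    by (simp add: sum.cartesian_product split_def)
  finally show ?thesis .
qed

lemma sum_Vs_Suc:
  "sum h (Vs (Suc n) M) = (\<Sum>a \<in> {0..<M}. \<Sum>g \<in> Vs n M. h (g(n := a)))"
  unfolding Vs_def lessThan_Suc by (rule sum_PiE_insert) simp

lemma dotp_upd: "y \<in> Vs n M \<Longrightarrow> dotp (Suc n) c (y(n := a)) = dotp n c y + c n * a"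
  unfolding dotp_def by (simp add: lessThan_Suc)

lemma dotp_upd': "dotp (Suc n) c (y(n := a)) = dotp n c y + c n * a"
  unfolding dotp_def by (simp add: lessThan_Suc)

lemma card_filter_sum: "finite A \<Longrightarrow> card {x \<in> A. P x} = (\<Sum>x\<in>A. if P x then 1 else 0)"
  by (simp add: sum.If_cases Int_def)

lemma count_cong:
  fixes M m :: int
  assumes M: "M > 0" and m: "m > 0" and mM: "m dvd M"
  shows "int (card {y \<in> Vs n M. [dotp n c y = r] (mod m)}) * m
           \<le> M ^ n * Gcd (insert m (c ` {..<n}))"
proof (induction n arbitrary: r)
  case 0
  have "Vs 0 M = {\<lambda>_. undefined}" unfolding Vs_def by simp
  hence "card {y \<in> Vs 0 M. [dotp 0 c y = r] (mod m)} \<le> 1"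
  proof -
    have "{y \<in> Vs 0 M. [dotp 0 c y = r] (mod m)} \<subseteq> {\<lambda>_. undefined}" using \<open>Vs 0 M = _\<close> by auto
    from card_mono[OF _ this] show ?thesis by simp
  qed
  hence "int (card {y \<in> Vs 0 M. [dotp 0 c y = r] (mod m)}) * m \<le> 1 * m"
    using m by (intro mult_right_mono) simp_all
  thus ?case using m by simp
next
  case (Suc n)
  define g' where "g' = Gcd (insert m (c ` {..<n}))"
  have g'0: "g' > 0" unfolding g'_def using m
    by (metis Gcd_0_iff Gcd_int_greater_eq_0 insert_subset less_le singletonD less_irrefl)
  have g'm: "g' dvd m" unfolding g'_def by (rule Gcd_dvd) simp
  have g'c: "g' dvd c i" if "i < n" for i
  proof -
    have "c i \<in> insert m (c ` {..<n})" using that by auto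
    thus ?thesis unfolding g'_def by (rule Gcd_dvd)
  qed
  have gS: "Gcd (insert m (c ` {..<Suc n})) = gcd (c n) g'"
    unfolding g'_def lessThan_Suc by (simp add: gcd.left_commute)
  define F where "F a = {y \<in> Vs n M. [dotp n c y + c n * a = r] (mod m)}" for a
  have card_split: "card {y \<in> Vs (Suc n) M. [dotp (Suc n) c y = r] (mod m)} = (\<Sum>a\<in>{0..<M}. card (F a))"
    unfolding card_filter_sum[OF finite_Vs] sum_Vs_Suc F_def
    by (simp add: card_filter_sum dotp_upd' cong: if_cong)
  have bnd: "int (card (F a)) * m \<le> (if [c n * a = r] (mod g') then M ^ n * g' else 0)" for a
  proof (cases "[c n * a = r] (mod g')")
    case True
    have "F a = {y \<in> Vs n M. [dotp n c y = r - c n * a] (mod m)}"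
      unfolding F_def cong_def by (auto simp: mod_eq_dvd_iff algebra_simps)
    thus ?thesis using Suc.IH[of "r - c n * a"] True unfolding g'_def by simp
  next
    case False
    have "F a = {}"
    proof (rule ccontr)
      assume "F a \<noteq> {}"
      then obtain y where y: "[dotp n c y + c n * a = r] (mod m)" unfolding F_def by auto
      hence y': "[dotp n c y + c n * a = r] (mod g')" using g'm cong_dvd_modulus by blast
      have "g' dvd dotp n c y" unfolding dotp_def by (rule dvd_sum) (simp add: g'c)
      hence "[dotp n c y = 0] (mod g')" by (simp add: cong_0_iff)
      hence "[dotp n c y + c n * a = 0 + c n * a] (mod g')" by (rule cong_add) simp
      hence "[c n * a = r] (mod g')" using y' by (metis add_0 cong_sym cong_trans)
      thus False using False by simp
    qed
    thus ?thesis using False by simp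
  qed
  have "int (card {y \<in> Vs (Suc n) M. [dotp (Suc n) c y = r] (mod m)}) * m
        = (\<Sum>a\<in>{0..<M}. int (card (F a)) * m)"
    unfolding card_split by (simp add: sum_distrib_right)
  also have "\<dots> \<le> (\<Sum>a\<in>{0..<M}. (if [c n * a = r] (mod g') then M ^ n * g' else 0))"
    by (rule sum_mono) (rule bnd)
  also have "\<dots> = M ^ n * g' * int (card {a \<in> {0..<M}. [c n * a = r] (mod g')})"
    by (simp add: sum.If_cases Int_def)
  also have "\<dots> = M ^ n * (int (card {a \<in> {0..<M}. [c n * a = r] (mod g')}) * g')"
    by (simp add: algebra_simps)
  also have "\<dots> \<le> M ^ n * (M * gcd (c n) g')"
    using one_dim[OF M g'0 dvd_trans[OF g'm mM], of "c n" r] M by (intro mult_left_mono) simp_all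
  also have "\<dots> = M ^ Suc n * Gcd (insert m (c ` {..<Suc n}))"
    unfolding gS by simp
  finally show ?case .
qed


definition Ee :: "int \<Rightarrow> int \<Rightarrow> complex" where
  "Ee M k = exp (2 * of_real pi * \<i> * of_int k / of_int M)"

lemma Ee_add: "Ee M (a + b) = Ee M a * Ee M b"
  unfolding Ee_def by (simp add: add_divide_distrib distrib_left exp_add)

lemma Ee_cis: "Ee M k = cis (2 * pi * k / M)"
proof -
  have "2 * of_real pi * \<i> * of_int k / of_int M = \<i> * complex_of_real (2 * pi * k / M)"
    by simp
  thus ?thesis unfolding Ee_def cis_conv_exp by (simp add: ac_simps)
qed

lemma Ee_mult_M: "M \<noteq> 0 \<Longrightarrow> Ee M (q * M) = 1"
proof -
  assume "M \<noteq> 0"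
  hence "2 * pi * real_of_int (q * M) / real_of_int M = 2 * pi * real_of_int q" by simp
  thus ?thesis unfolding Ee_cis by simp
qed

lemma Ee_mod: "M \<noteq> 0 \<Longrightarrow> Ee M (k mod M) = Ee M k"
proof -
  assume M: "M \<noteq> 0"
  have "k = (k div M) * M + k mod M" by simp
  hence "Ee M k = Ee M ((k div M) * M) * Ee M (k mod M)" by (metis Ee_add)
  thus ?thesis using Ee_mult_M[OF M] by simp
qed

lemma Ee_cong: "M \<noteq> 0 \<Longrightarrow> a mod M = b mod M \<Longrightarrow> Ee M a = Ee M b"
  by (metis Ee_mod)

lemma norm_Ee: "norm (Ee M k) = 1"
  unfolding Ee_cis by simp

lemma Ee_eq_1: "M > 0 \<Longrightarrow> Ee M k = 1 \<Longrightarrow> M dvd k"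
proof -
  assume M: "M > 0" and e: "Ee M k = 1"
  have "cos (2 * pi * k / M) = 1" using arg_cong[OF e, of Re] unfolding Ee_cis by simp
  then obtain m :: int where m: "2 * pi * k / M = m * 2 * pi"
    unfolding cos_one_2pi_int by auto
  hence "real_of_int k = real_of_int (m * M)" using M pi_gt_zero
    by (simp add: field_simps)
  hence "k = m * M" by linarith
  thus ?thesis by simp
qed

lemma dotp_mod_cong:
  assumes "\<And>i. i < n \<Longrightarrow> a i mod M = b i mod M"
  shows "dotp n w a mod M = dotp n w b mod M"
proof -
  have "[dotp n w a = dotp n w b] (mod M)" unfolding dotp_def
    by (rule cong_sum, rule cong_scalar_left) (use assms in \<open>simp add: cong_def\<close>)
  thus ?thesis by (simp add: cong_def)
qed

lemma dotp_add: "dotp n w (\<lambda>i. a i + b i) = dotp n w a + dotp n w b"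
  unfolding dotp_def by (simp add: distrib_left sum.distrib)

lemma dotp_diff: "dotp n w (\<lambda>i. a i - b i) = dotp n w a - dotp n w b"
  unfolding dotp_def by (simp add: right_diff_distrib sum_subtractf)


lemma t3: assumes "0 \<le> (a::int)" "a < M" shows "((a + b) mod M - b) mod M = a"
proof -
  have "((a + b) mod M - b) mod M = (a + b - b) mod M" by (simp add: mod_diff_left_eq)
  thus ?thesis using assms by simp
qed
lemma t4: assumes "0 \<le> (a::int)" "a < M" shows "((a - b) mod M + b) mod M = a"
proof -
  have "((a - b) mod M + b) mod M = (a - b + b) mod M" by (simp add: mod_add_left_eq)
  thus ?thesis using assms by simp
qed
lemma t5: assumes "M > (0::int)" shows "(\<lambda>i. if i < n then (f i) mod M else undefined) \<in> Vs n M"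
  using assms by (simp add: Vs_def PiE_iff extensional_def)
lemma Vs_range: assumes "y \<in> Vs n M" "i < n" shows "0 \<le> y i \<and> y i < M"
  using assms by (simp add: Vs_def PiE_iff)
lemma Vs_undef: assumes "y \<in> Vs n M" "\<not> i < n" shows "y i = undefined"
  using assms by (simp add: Vs_def PiE_iff extensional_def)

definition Kset :: "nat \<Rightarrow> int \<Rightarrow> (nat \<Rightarrow> int) \<Rightarrow> (nat \<Rightarrow> int) set" where
  "Kset n M c = {y \<in> Vs n M. M dvd dotp n c y}"

lemma shift:
  assumes M: "M > 0" and z: "z \<in> Kset n M c"
  shows "(\<Sum>y\<in>Kset n M c. Ee M (dotp n w y)) = Ee M (dotp n w z) * (\<Sum>y\<in>Kset n M c. Ee M (dotp n w y))"
proof -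
  define \<phi> where "\<phi> y = (\<lambda>i. if i < n then (y i + z i) mod M else undefined)" for y
  define \<psi> where "\<psi> y = (\<lambda>i. if i < n then (y i - z i) mod M else undefined)" for y
  have zV: "z \<in> Vs n M" and zd: "M dvd dotp n c z" using z unfolding Kset_def by auto
  have phimod: "dotp n v (\<phi> y) mod M = (dotp n v y + dotp n v z) mod M" for v y
  proof -
    have "dotp n v (\<phi> y) mod M = dotp n v (\<lambda>i. y i + z i) mod M"
      by (rule dotp_mod_cong) (simp add: \<phi>_def)
    thus ?thesis by (simp add: dotp_add)
  qed
  have psimod: "dotp n v (\<psi> y) mod M = (dotp n v y - dotp n v z) mod M" for v y
  proof -
    have "dotp n v (\<psi> y) mod M = dotp n v (\<lambda>i. y i - z i) mod M"
      by (rule dotp_mod_cong) (simp add: \<psi>_def)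
    thus ?thesis by (simp add: dotp_diff)
  qed
  have bij: "bij_betw \<phi> (Kset n M c) (Kset n M c)"
  proof (rule bij_betw_byWitness[where f' = \<psi>])
    show "\<forall>a\<in>Kset n M c. \<psi> (\<phi> a) = a"
    proof
      fix y assume y: "y \<in> Kset n M c"
      hence yV: "y \<in> Vs n M" unfolding Kset_def by simp
      show "\<psi> (\<phi> y) = y"
      proof
        fix i show "\<psi> (\<phi> y) i = y i"
        proof (cases "i < n")
          case True
          hence "0 \<le> y i \<and> y i < M" using yV Vs_range by blast
          thus ?thesis using True t3[of "y i" M "z i"] unfolding \<psi>_def \<phi>_def by simp
        next
          case False thus ?thesis using Vs_undef[OF yV False] unfolding \<psi>_def by simp
        qed
      qed
    qed
    show "\<forall>a\<in>Kset n M c. \<phi> (\<psi> a) = a"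
    proof
      fix y assume y: "y \<in> Kset n M c"
      hence yV: "y \<in> Vs n M" unfolding Kset_def by simp
      show "\<phi> (\<psi> y) = y"
      proof
        fix i show "\<phi> (\<psi> y) i = y i"
        proof (cases "i < n")
          case True
          hence "0 \<le> y i \<and> y i < M" using yV Vs_range by blast
          thus ?thesis using True t4[of "y i" M "z i"] unfolding \<psi>_def \<phi>_def by simp
        next
          case False thus ?thesis using Vs_undef[OF yV False] unfolding \<phi>_def by simp
        qed
      qed
    qed
    show "\<phi> ` Kset n M c \<subseteq> Kset n M c"
    proof
      fix u assume "u \<in> \<phi> ` Kset n M c"
      then obtain y where y: "y \<in> Kset n M c" "u = \<phi> y" by blast
      have "u \<in> Vs n M" unfolding y(2) \<phi>_def using M by (rule t5)
      moreover have "M dvd dotp n c u"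
      proof -
        have "M dvd dotp n c y" using y unfolding Kset_def by simp
        hence "M dvd dotp n c y + dotp n c z" using zd by simp
        hence "(dotp n c y + dotp n c z) mod M = 0" by simp
        hence "dotp n c u mod M = 0" using phimod[of c y] y(2) by simp
        thus ?thesis using mod_eq_0_iff_dvd by blast
      qed
      ultimately show "u \<in> Kset n M c" unfolding Kset_def by simp
    qed
    show "\<psi> ` Kset n M c \<subseteq> Kset n M c"
    proof
      fix u assume "u \<in> \<psi> ` Kset n M c"
      then obtain y where y: "y \<in> Kset n M c" "u = \<psi> y" by blast
      have "u \<in> Vs n M" unfolding y(2) \<psi>_def using M by (rule t5)
      moreover have "M dvd dotp n c u"
      proof -
        have "M dvd dotp n c y" using y unfolding Kset_def by simp
        hence "M dvd dotp n c y - dotp n c z" using zd by simp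
        hence "(dotp n c y - dotp n c z) mod M = 0" by simp
        hence "dotp n c u mod M = 0" using psimod[of c y] y(2) by simp
        thus ?thesis using mod_eq_0_iff_dvd by blast
      qed
      ultimately show "u \<in> Kset n M c" unfolding Kset_def by simp
    qed
  qed
  have "(\<Sum>y\<in>Kset n M c. Ee M (dotp n w y)) = (\<Sum>y\<in>Kset n M c. Ee M (dotp n w (\<phi> y)))"
    by (rule sum.reindex_bij_betw[OF bij, symmetric])
  also have "\<dots> = (\<Sum>y\<in>Kset n M c. Ee M (dotp n w y) * Ee M (dotp n w z))"
  proof (intro sum.cong refl)
    fix y
    have "Ee M (dotp n w (\<phi> y)) = Ee M (dotp n w y + dotp n w z)"
      using M phimod[of w y] by (intro Ee_cong) simp_all
    thus "Ee M (dotp n w (\<phi> y)) = Ee M (dotp n w y) * Ee M (dotp n w z)" by (simp add: Ee_add)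
  qed
  also have "\<dots> = (\<Sum>y\<in>Kset n M c. Ee M (dotp n w y)) * Ee M (dotp n w z)"
    by (simp add: sum_distrib_right)
  finally show ?thesis by (simp add: mult.commute)
qed

lemma shift_dvd:
  assumes M: "M > 0" and z: "z \<in> Kset n M c"
    and nz: "(\<Sum>y\<in>Kset n M c. Ee M (dotp n w y)) \<noteq> 0"
  shows "M dvd dotp n w z"
proof -
  have "Ee M (dotp n w z) = 1" using shift[OF M z, of w] nz by simp
  thus ?thesis using Ee_eq_1 M by blast
qed

lemma card_Kset:
  assumes M: "M > 0"
  shows "int (card (Kset (Suc k) M c)) \<le> M ^ k * Gcd (insert M (c ` {..<Suc k}))"
proof -
  have "Kset (Suc k) M c = {y \<in> Vs (Suc k) M. [dotp (Suc k) c y = 0] (mod M)}"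
    unfolding Kset_def by (simp add: cong_0_iff)
  hence "int (card (Kset (Suc k) M c)) * M \<le> M ^ Suc k * Gcd (insert M (c ` {..<Suc k}))"
    using count_cong[OF M M dvd_refl, of "Suc k" c 0] by simp
  hence "int (card (Kset (Suc k) M c)) * M \<le> (M ^ k * Gcd (insert M (c ` {..<Suc k}))) * M"
    by (simp add: algebra_simps)
  thus ?thesis using M by simp
qed


definition Cs :: "nat \<Rightarrow> int \<Rightarrow> (nat \<Rightarrow> nat \<Rightarrow> int) set" where
  "Cs n M = PiE {..<n} (\<lambda>_. Vs n M)"

definition mk :: "nat \<Rightarrow> (nat \<Rightarrow> nat \<Rightarrow> int) \<Rightarrow> int mat" where
  "mk n f = mat n n (\<lambda>(i,j). f j i)"

lemma mk_carrier[simp]: "mk n f \<in> carrier_mat n n"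
  unfolding mk_def by simp

lemma mk_index[simp]: "i < n \<Longrightarrow> j < n \<Longrightarrow> mk n f $$ (i,j) = f j i"
  unfolding mk_def by simp

lemma mk_dim[simp]: "dim_row (mk n f) = n" "dim_col (mk n f) = n"
  unfolding mk_def by simp_all

lemma Cs_iff: "f \<in> Cs n M \<longleftrightarrow> (\<forall>j<n. f j \<in> Vs n M) \<and> (\<forall>j. \<not> j < n \<longrightarrow> f j = undefined)"
  unfolding Cs_def PiE_iff extensional_def by auto

lemma finite_Cs[simp]: "finite (Cs n M)"
  unfolding Cs_def by (simp add: finite_PiE)

lemma Vs_iff: "y \<in> Vs n M \<longleftrightarrow> (\<forall>i<n. 0 \<le> y i \<and> y i < M) \<and> (\<forall>i. \<not> i < n \<longrightarrow> y i = undefined)"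
  unfolding Vs_def PiE_iff extensional_def by auto

lemma inj_mk: "inj_on (mk n) (Cs n M)"
proof (rule inj_onI)
  fix f g assume f: "f \<in> Cs n M" and g: "g \<in> Cs n M" and eq: "mk n f = mk n g"
  show "f = g"
  proof
    fix j show "f j = g j"
    proof (cases "j < n")
      case True
      hence fj: "f j \<in> Vs n M" and gj: "g j \<in> Vs n M" using f g Cs_iff by blast+
      show ?thesis
      proof
        fix i show "f j i = g j i"
        proof (cases "i < n")
          case True
          have "mk n f $$ (i,j) = mk n g $$ (i,j)" using eq by simp
          thus ?thesis using True \<open>j < n\<close> by simp
        next
          case False thus ?thesis using fj gj Vs_iff by metis
        qed
      qed
    next
      case False thus ?thesis using f g Cs_iff by metis
    qed
  qed
qed

lemma residue_mk: "residue_matrices n M = mk n ` Cs n M"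
proof
  show "residue_matrices n M \<subseteq> mk n ` Cs n M"
  proof
    fix X assume X: "X \<in> residue_matrices n M"
    define f where "f = (\<lambda>j. if j < n then (\<lambda>i. if i < n then X $$ (i,j) else undefined) else undefined)"
    have "f \<in> Cs n M" unfolding Cs_iff Vs_iff f_def using X unfolding residue_matrices_def by auto
    moreover have "mk n f = X"
      using X unfolding residue_matrices_def by (intro eq_matI) (auto simp: f_def)
    ultimately show "X \<in> mk n ` Cs n M" by blast
  qed
  show "mk n ` Cs n M \<subseteq> residue_matrices n M"
  proof
    fix X assume "X \<in> mk n ` Cs n M"
    then obtain f where f: "f \<in> Cs n M" "X = mk n f" by blast
    have "\<forall>i<n. \<forall>j<n. X $$ (i,j) \<in> {0..<M}"
    proof (intro allI impI)
      fix i j assume ij: "i < n" "j < n"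
      hence "f j \<in> Vs n M" using f Cs_iff by blast
      hence "0 \<le> f j i \<and> f j i < M" using ij Vs_iff by blast
      thus "X $$ (i,j) \<in> {0..<M}" using f ij by simp
    qed
    thus "X \<in> residue_matrices n M" unfolding residue_matrices_def using f by simp
  qed
qed

lemma det_mod_cong:
  fixes A B :: "int mat"
  assumes A: "A \<in> carrier_mat n n" and B: "B \<in> carrier_mat n n"
    and e: "\<And>i j. i < n \<Longrightarrow> j < n \<Longrightarrow> A $$ (i,j) mod M = B $$ (i,j) mod M"
  shows "det A mod M = det B mod M"
proof -
  have "[det A = det B] (mod M)" unfolding det_def'[OF A] det_def'[OF B]
  proof (rule cong_sum, rule cong_scalar_left, rule cong_prod)
    fix p i assume p: "p \<in> {p. p permutes {0..<n}}" and i: "i \<in> {0..<n}"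
    hence "i < n" "p i < n" using permutes_in_image[of p "{0..<n}" i] by auto
    thus "[A $$ (i, p i) = B $$ (i, p i)] (mod M)" using e by (simp add: cong_def)
  qed
  thus ?thesis by (simp add: cong_def)
qed

lemma linform_mod_cong:
  fixes X Y :: "int mat"
  assumes e: "\<And>i j. i < n \<Longrightarrow> j < n \<Longrightarrow> X $$ (i,j) mod M = Y $$ (i,j) mod M"
  shows "linform n A X mod M = linform n A Y mod M"
proof -
  have "[linform n A X = linform n A Y] (mod M)" unfolding linform_def
    by (rule cong_sum, rule cong_sum, rule cong_scalar_left) (use e in \<open>simp add: cong_def\<close>)
  thus ?thesis by (simp add: cong_def)
qed


definition sh :: "nat \<Rightarrow> int \<Rightarrow> (nat \<Rightarrow> int) \<Rightarrow> (nat \<Rightarrow> nat \<Rightarrow> int) \<Rightarrow> (nat \<Rightarrow> nat \<Rightarrow> int)" where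
  "sh k M t f = (\<lambda>j. if j < k then (\<lambda>i. if i < Suc k then (f j i + t j * f k i) mod M else undefined) else f j)"

definition Ymat :: "nat \<Rightarrow> (nat \<Rightarrow> int) \<Rightarrow> (nat \<Rightarrow> nat \<Rightarrow> int) \<Rightarrow> int mat" where
  "Ymat k t f = mat (Suc k) (Suc k) (\<lambda>(i,j). f j i + (if j < k then t j * f k i else 0))"

definition Vmat :: "nat \<Rightarrow> (nat \<Rightarrow> int) \<Rightarrow> int mat" where
  "Vmat k t = mat (Suc k) (Suc k) (\<lambda>(i,j). if i = j then 1 else if i = k \<and> j < k then t j else 0)"

lemma sh_mem:
  assumes M: "M > 0" and f: "f \<in> Cs (Suc k) M"
  shows "sh k M t f \<in> Cs (Suc k) M"
  unfolding Cs_iff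
proof (intro conjI allI impI)
  fix j assume j: "j < Suc k"
  show "sh k M t f j \<in> Vs (Suc k) M"
  proof (cases "j < k")
    case True
    thus ?thesis unfolding sh_def using M by (simp add: Vs_iff)
  next
    case False thus ?thesis unfolding sh_def using f j Cs_iff by simp
  qed
next
  fix j assume "\<not> j < Suc k"
  thus "sh k M t f j = undefined" unfolding sh_def using f Cs_iff by simp
qed

lemma sh_inv:
  assumes M: "M > 0" and f: "f \<in> Cs (Suc k) M"
  shows "sh k M (\<lambda>j. - t j) (sh k M t f) = f"
proof
  fix j show "sh k M (\<lambda>j. - t j) (sh k M t f) j = f j"
  proof (cases "j < k")
    case True
    hence fj: "f j \<in> Vs (Suc k) M" using f Cs_iff by simp
    show ?thesis
    proof
      fix i show "sh k M (\<lambda>j. - t j) (sh k M t f) j i = f j i"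
      proof (cases "i < Suc k")
        case True
        hence "0 \<le> f j i \<and> f j i < M" using fj Vs_iff by blast
        hence "((f j i + t j * f k i) mod M + - t j * f k i) mod M = f j i"
          using t3[of "f j i" M "t j * f k i"] by simp
        thus ?thesis using True \<open>j < k\<close> unfolding sh_def by simp
      next
        case False thus ?thesis using fj Vs_iff \<open>j < k\<close> unfolding sh_def by simp
      qed
    qed
  next
    case False thus ?thesis unfolding sh_def by simp
  qed
qed

lemma sh_bij:
  assumes M: "M > 0"
  shows "bij_betw (sh k M t) (Cs (Suc k) M) (Cs (Suc k) M)"
proof (rule bij_betw_byWitness[where f' = "sh k M (\<lambda>j. - t j)"])
  show "\<forall>a\<in>Cs (Suc k) M. sh k M (\<lambda>j. - t j) (sh k M t a) = a" using sh_inv[OF M] by blast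
  show "\<forall>a\<in>Cs (Suc k) M. sh k M t (sh k M (\<lambda>j. - t j) a) = a"
    using sh_inv[OF M, of _ k "\<lambda>j. - t j"] by simp
  show "sh k M t ` Cs (Suc k) M \<subseteq> Cs (Suc k) M" using sh_mem[OF M] by blast
  show "sh k M (\<lambda>j. - t j) ` Cs (Suc k) M \<subseteq> Cs (Suc k) M" using sh_mem[OF M] by blast
qed

lemma mk_V: "mk (Suc k) f * Vmat k t = Ymat k t f"
proof (rule eq_matI)
  fix i j assume i: "i < dim_row (Ymat k t f)" and j: "j < dim_col (Ymat k t f)"
  hence i': "i < Suc k" and j': "j < Suc k" unfolding Ymat_def by auto
  have "(mk (Suc k) f * Vmat k t) $$ (i,j) = (\<Sum>l = 0..<Suc k. f l i * (if l = j then 1 else if l = k \<and> j < k then t j else 0))"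
    using i' j' unfolding Vmat_def by (simp add: scalar_prod_def row_def col_def)
  also have "\<dots> = (\<Sum>l = 0..<Suc k. (if l = j then f l i else 0) + (if l = k \<and> j < k then t j * f k i else 0))"
    by (rule sum.cong) auto
  also have "\<dots> = f j i + (if j < k then t j * f k i else 0)"
    using j' by (simp add: sum.distrib)
  finally show "(mk (Suc k) f * Vmat k t) $$ (i,j) = Ymat k t f $$ (i,j)"
    using i' j' unfolding Ymat_def by simp
qed (auto simp: Ymat_def Vmat_def)

lemma det_V: "det (Vmat k t) = 1"
proof -
  have "det (Vmat k t) = prod_list (diag_mat (Vmat k t))"
    by (rule det_lower_triangular[of "Suc k"]) (auto simp: Vmat_def)
  also have "\<dots> = 1" unfolding prod_list_diag_prod by (simp add: Vmat_def)
  finally show ?thesis .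
qed

lemma det_Y: "det (Ymat k t f) = det (mk (Suc k) f)"
proof -
  have "det (Ymat k t f) = det (mk (Suc k) f) * det (Vmat k t)"
    unfolding mk_V[symmetric] by (rule det_mult) (auto simp: Vmat_def)
  thus ?thesis by (simp add: det_V)
qed

lemma sh_entries:
  assumes "i < Suc k" "j < Suc k"
  shows "mk (Suc k) (sh k M t f) $$ (i,j) mod M = Ymat k t f $$ (i,j) mod M"
  using assms by (cases "j < k") (simp_all add: sh_def Ymat_def)

lemma det_sh:
  "det (mk (Suc k) (sh k M t f)) mod M = det (mk (Suc k) f) mod M"
proof -
  have "det (mk (Suc k) (sh k M t f)) mod M = det (Ymat k t f) mod M"
    by (rule det_mod_cong[of _ "Suc k"]) (simp_all add: Ymat_def sh_entries del: mk_index)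
  thus ?thesis by (simp add: det_Y)
qed

definition wv :: "nat \<Rightarrow> int mat \<Rightarrow> (nat \<Rightarrow> int) \<Rightarrow> nat \<Rightarrow> int" where
  "wv k A t i = A $$ (i,k) + (\<Sum>j<k. t j * A $$ (i,j))"

definition Phi0 :: "nat \<Rightarrow> int mat \<Rightarrow> (nat \<Rightarrow> nat \<Rightarrow> int) \<Rightarrow> int" where
  "Phi0 k A g = (\<Sum>i<Suc k. \<Sum>j<k. A $$ (i,j) * g j i)"

lemma linform_Y:
  "linform (Suc k) A (Ymat k t f) = Phi0 k A f + dotp (Suc k) (wv k A t) (f k)"
proof -
  have "linform (Suc k) A (Ymat k t f) = (\<Sum>i<Suc k. \<Sum>j<Suc k. A $$ (i,j) * (f j i + (if j < k then t j * f k i else 0)))"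
    unfolding linform_def Ymat_def by (intro sum.cong refl) auto
  also have "\<dots> = (\<Sum>i<Suc k. (\<Sum>j<k. A $$ (i,j) * f j i) + (A $$ (i,k) * f k i + (\<Sum>j<k. t j * A $$ (i,j)) * f k i))"
    by (intro sum.cong refl) (simp add: lessThan_Suc sum.distrib distrib_left sum_distrib_right sum_distrib_left algebra_simps)
  also have "\<dots> = Phi0 k A f + dotp (Suc k) (wv k A t) (f k)"
    unfolding Phi0_def dotp_def wv_def by (simp add: sum.distrib algebra_simps sum_distrib_left)
  finally show ?thesis .
qed

lemma linform_sh:
  "linform (Suc k) A (mk (Suc k) (sh k M t f)) mod M = (Phi0 k A f + dotp (Suc k) (wv k A t) (f k)) mod M"
proof -
  have "linform (Suc k) A (mk (Suc k) (sh k M t f)) mod M = linform (Suc k) A (Ymat k t f) mod M"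
    by (rule linform_mod_cong) (simp add: sh_entries del: mk_index)
  thus ?thesis by (simp add: linform_Y)
qed


definition cof :: "nat \<Rightarrow> (nat \<Rightarrow> nat \<Rightarrow> int) \<Rightarrow> nat \<Rightarrow> int" where
  "cof k g i = cofactor (mk (Suc k) (g(k := (\<lambda>_. 0)))) i k"

lemma cof_indep: "cofactor (mk (Suc k) (g(k := a))) i k = cof k g i"
proof -
  have "mat_delete (mk (Suc k) (g(k := a))) i k = mat_delete (mk (Suc k) (g(k := (\<lambda>_. 0)))) i k"
  proof (rule eq_matI)
    fix i' j' assume i': "i' < dim_row (mat_delete (mk (Suc k) (g(k := (\<lambda>_. 0)))) i k)"
      and j': "j' < dim_col (mat_delete (mk (Suc k) (g(k := (\<lambda>_. 0)))) i k)"
    hence i'': "i' < k" and j'': "j' < k" by simp_all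
    have r: "(if i' < i then i' else Suc i') < Suc k" using i'' by auto
    show "mat_delete (mk (Suc k) (g(k := a))) i k $$ (i', j') = mat_delete (mk (Suc k) (g(k := (\<lambda>_. 0)))) i k $$ (i', j')"
      unfolding mat_delete_def using i'' j'' r by simp
  qed simp_all
  thus ?thesis unfolding cof_def cofactor_def by simp
qed

lemma det_upd: "det (mk (Suc k) (g(k := a))) = dotp (Suc k) (cof k g) a"
proof -
  have "det (mk (Suc k) (g(k := a))) = (\<Sum>i<Suc k. mk (Suc k) (g(k := a)) $$ (i,k) * cofactor (mk (Suc k) (g(k := a))) i k)"
    by (rule laplace_expansion_column) simp_all
  also have "\<dots> = (\<Sum>i<Suc k. cof k g i * a i)"
    by (intro sum.cong refl) (simp add: cof_indep mult.commute)
  finally show ?thesis unfolding dotp_def .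
qed

lemma det_zero_col:
  assumes j: "j < k"
  shows "dotp (Suc k) (cof k g) (g j) = 0"
proof -
  have "det (mk (Suc k) (g(k := g j))) = 0"
  proof (rule det_identical_columns[of _ "Suc k" j k])
    show "col (mk (Suc k) (g(k := g j))) j = col (mk (Suc k) (g(k := g j))) k"
      using j by (intro eq_vecI) (simp_all add: col_def)
  qed (use j in simp_all)
  thus ?thesis using det_upd by metis
qed

lemma dotp_delta:
  assumes i: "i < n"
  shows "dotp n c (\<lambda>l. if l < n then (if l = i then v else 0) else undefined) = c i * v"
proof -
  have "dotp n c (\<lambda>l. if l < n then (if l = i then v else 0) else undefined) = (\<Sum>l<n. if l = i then c l * v else 0)"
    unfolding dotp_def by (rule sum.cong) auto
  also have "\<dots> = c i * v" using i by simp
  finally show ?thesis .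
qed


lemma gcd_bound_step:
  fixes M :: int
  assumes M: "M > 0" and g: "g \<in> PiE {..<k} (\<lambda>_. Vs (Suc k) M)"
    and nz: "(\<Sum>a\<in>Kset (Suc k) M (cof k g). Ee M (dotp (Suc k) w a)) \<noteq> 0"
  shows "(\<forall>j<k. M dvd dotp (Suc k) w (g j))"
    and "Gcd (insert M (cof k g ` {..<Suc k})) dvd Gcd (insert M (w ` {..<Suc k}))"
proof -
  let ?n = "Suc k"
  let ?c = "cof k g"
  show "\<forall>j<k. M dvd dotp ?n w (g j)"
  proof (intro allI impI)
    fix j assume j: "j < k"
    have "g j \<in> Vs ?n M" using g j by (simp add: PiE_iff)
    moreover have "dotp ?n ?c (g j) = 0" by (rule det_zero_col[OF j])
    ultimately have "g j \<in> Kset ?n M ?c" unfolding Kset_def by simp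
    thus "M dvd dotp ?n w (g j)" by (rule shift_dvd[OF M _ nz])
  qed
  define Gc where "Gc = Gcd (insert M (?c ` {..<?n}))"
  have GcM: "Gc dvd M" unfolding Gc_def by (rule Gcd_dvd) simp
  have Gcc: "Gc dvd ?c i" if "i < ?n" for i
    unfolding Gc_def by (rule Gcd_dvd) (use that in simp)
  have Gc0: "Gc > 0"
  proof -
    have "Gc \<noteq> 0" using GcM M by auto
    moreover have "Gc \<ge> 0" unfolding Gc_def by simp
    ultimately show ?thesis by simp
  qed
  define r where "r = M div Gc"
  have Mr: "M = Gc * r" unfolding r_def using GcM by simp
  have r0: "r > 0" using Mr M Gc0 by (simp add: zero_less_mult_iff)
  have Gcw: "Gc dvd w i" if i: "i < ?n" for i
  proof -
    define z where "z = (\<lambda>l. if l < ?n then (if l = i then r mod M else 0) else undefined)"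
    have zV: "z \<in> Vs ?n M" unfolding z_def Vs_iff using M by simp
    obtain q where q: "?c i = Gc * q" using Gcc[OF i] by blast
    have "dotp ?n ?c z = ?c i * (r mod M)" unfolding z_def by (rule dotp_delta[OF i])
    hence "dotp ?n ?c z mod M = (?c i * r) mod M" by (simp add: mod_mult_right_eq)
    also have "?c i * r = q * M" using q Mr by simp
    finally have "dotp ?n ?c z mod M = 0" by simp
    hence "M dvd dotp ?n ?c z" using mod_eq_0_iff_dvd by blast
    hence "z \<in> Kset ?n M ?c" using zV unfolding Kset_def by simp
    hence "M dvd dotp ?n w z" by (rule shift_dvd[OF M _ nz])
    moreover have "dotp ?n w z = w i * (r mod M)" unfolding z_def by (rule dotp_delta[OF i])
    ultimately have "(w i * (r mod M)) mod M = 0" by simp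
    hence "(w i * r) mod M = 0" by (simp add: mod_mult_right_eq)
    hence "Gc * r dvd w i * r" using Mr by (simp add: mod_eq_0_iff_dvd)
    thus ?thesis using r0 by (simp add: mult.commute)
  qed
  show "Gc dvd Gcd (insert M (w ` {..<Suc k}))"
    by (rule Gcd_greatest) (use GcM Gcw in auto)
qed

lemma inner_bound:
  fixes M :: int
  assumes M: "M > 0" and g: "g \<in> PiE {..<k} (\<lambda>_. Vs (Suc k) M)"
  shows "norm (\<Sum>a\<in>Kset (Suc k) M (cof k g). Ee M (dotp (Suc k) w a))
    \<le> (if (\<forall>j<k. M dvd dotp (Suc k) w (g j)) then real_of_int (M ^ k * Gcd (insert M (w ` {..<Suc k}))) else 0)"
proof (cases "(\<Sum>a\<in>Kset (Suc k) M (cof k g). Ee M (dotp (Suc k) w a)) = 0")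
  case True
  have "0 \<le> M ^ k * Gcd (insert M (w ` {..<Suc k}))" using M by simp
  hence "0 \<le> real_of_int (M ^ k * Gcd (insert M (w ` {..<Suc k})))" by linarith
  thus ?thesis using True by simp
next
  case False
  note st = gcd_bound_step[OF M g False]
  define Gw where "Gw = Gcd (insert M (w ` {..<Suc k}))"
  define Gc where "Gc = Gcd (insert M (cof k g ` {..<Suc k}))"
  have Gw0: "Gw > 0"
  proof -
    have "Gw dvd M" unfolding Gw_def by (rule Gcd_dvd) simp
    hence "Gw \<noteq> 0" using M by auto
    moreover have "Gw \<ge> 0" unfolding Gw_def by simp
    ultimately show ?thesis by simp
  qed
  have "Gc \<le> Gw" using zdvd_imp_le[OF st(2)[folded Gw_def Gc_def] Gw0] .
  have "norm (\<Sum>a\<in>Kset (Suc k) M (cof k g). Ee M (dotp (Suc k) w a))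
      \<le> (\<Sum>a\<in>Kset (Suc k) M (cof k g). norm (Ee M (dotp (Suc k) w a)))"
    by (rule norm_sum)
  also have "\<dots> = real (card (Kset (Suc k) M (cof k g)))" by (simp add: norm_Ee)
  also have "\<dots> \<le> real_of_int (M ^ k * Gc)"
    using card_Kset[OF M, of k "cof k g"] unfolding Gc_def by linarith
  also have "\<dots> \<le> real_of_int (M ^ k * Gw)"
    using \<open>Gc \<le> Gw\<close> M by (simp add: mult_left_mono)
  finally show ?thesis using st(1) unfolding Gw_def by simp
qed


lemma core:
  fixes M :: int
  assumes M: "M > 0"
  shows "norm (\<Sum>f \<in> Cs (Suc k) M. if det (mk (Suc k) f) mod M = 0 then Ee M (linform (Suc k) A (mk (Suc k) f)) else 0)
    \<le> real_of_int ((M ^ k * Gcd (insert M (wv k A t ` {..<Suc k}))) ^ Suc k)"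
proof -
  let ?n = "Suc k"
  define w where "w = wv k A t"
  define P where "P = PiE {..<k} (\<lambda>_. Vs ?n M)"
  define Gw where "Gw = Gcd (insert M (w ` {..<?n}))"
  define B where "B = M ^ k * Gw"
  have Gw0: "Gw \<ge> 0" unfolding Gw_def by simp
  have B0: "B \<ge> 0" unfolding B_def using Gw0 M by simp
  define h where "h f = (if det (mk ?n f) mod M = 0 then Ee M (linform ?n A (mk ?n f)) else 0)" for f
  define h' where "h' f = (if det (mk ?n f) mod M = 0 then Ee M (Phi0 k A f + dotp ?n w (f k)) else 0)" for f
  define T where "T g = (\<Sum>a\<in>Kset ?n M (cof k g). Ee M (dotp ?n w a))" for g
  have "(\<Sum>f \<in> Cs ?n M. h f) = (\<Sum>f \<in> Cs ?n M. h (sh k M t f))"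
    using sum.reindex_bij_betw[OF sh_bij[OF M], of h k t] by simp
  also have "\<dots> = (\<Sum>f \<in> Cs ?n M. h' f)"
  proof (rule sum.cong[OF refl])
    fix f
    have "Ee M (linform ?n A (mk ?n (sh k M t f))) = Ee M (Phi0 k A f + dotp ?n w (f k))"
      using M linform_sh[of k A M t f] unfolding w_def by (intro Ee_cong) simp_all
    thus "h (sh k M t f) = h' f" unfolding h_def h'_def using det_sh[of k M t f] by simp
  qed
  also have "\<dots> = (\<Sum>a\<in>Vs ?n M. \<Sum>g\<in>P. h' (g(k := a)))"
    unfolding Cs_def lessThan_Suc P_def by (rule sum_PiE_insert) simp
  also have "\<dots> = (\<Sum>g\<in>P. \<Sum>a\<in>Vs ?n M. h' (g(k := a)))"
    by (rule sum.swap)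
  also have "\<dots> = (\<Sum>g\<in>P. Ee M (Phi0 k A g) * T g)"
  proof (rule sum.cong[OF refl])
    fix g
    have ph: "Phi0 k A (g(k := a)) = Phi0 k A g" for a
      unfolding Phi0_def by (intro sum.cong refl) auto
    have "(\<Sum>a\<in>Vs ?n M. h' (g(k := a))) = (\<Sum>a\<in>Vs ?n M. if M dvd dotp ?n (cof k g) a then Ee M (Phi0 k A g) * Ee M (dotp ?n w a) else 0)"
      unfolding h'_def by (intro sum.cong refl) (simp add: det_upd ph Ee_add mod_eq_0_iff_dvd)
    also have "\<dots> = (\<Sum>a\<in>Kset ?n M (cof k g). Ee M (Phi0 k A g) * Ee M (dotp ?n w a))"
      unfolding Kset_def by (rule sum.inter_filter[symmetric]) simp
    also have "\<dots> = Ee M (Phi0 k A g) * T g"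
      unfolding T_def by (simp add: sum_distrib_left)
    finally show "(\<Sum>a\<in>Vs ?n M. h' (g(k := a))) = Ee M (Phi0 k A g) * T g" .
  qed
  finally have eq: "(\<Sum>f \<in> Cs ?n M. h f) = (\<Sum>g\<in>P. Ee M (Phi0 k A g) * T g)" .
  have "norm (\<Sum>f \<in> Cs ?n M. h f) \<le> (\<Sum>g\<in>P. norm (Ee M (Phi0 k A g) * T g))"
    unfolding eq by (rule norm_sum)
  also have "\<dots> = (\<Sum>g\<in>P. norm (T g))"
    by (simp add: norm_mult norm_Ee)
  also have "\<dots> \<le> (\<Sum>g\<in>P. if (\<forall>j<k. M dvd dotp ?n w (g j)) then real_of_int B else 0)"
  proof (rule sum_mono)
    fix g assume "g \<in> P"
    thus "norm (T g) \<le> (if (\<forall>j<k. M dvd dotp ?n w (g j)) then real_of_int B else 0)"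
      unfolding T_def B_def Gw_def P_def by (rule inner_bound[OF M])
  qed
  also have "\<dots> = real_of_int B * real (card {g\<in>P. \<forall>j<k. M dvd dotp ?n w (g j)})"
    by (simp add: sum.If_cases P_def finite_PiE Int_def mult.commute)
  also have "{g\<in>P. \<forall>j<k. M dvd dotp ?n w (g j)} = PiE {..<k} (\<lambda>_. Kset ?n M w)"
  proof (intro equalityI subsetI)
    fix g assume "g \<in> {g\<in>P. \<forall>j<k. M dvd dotp ?n w (g j)}"
    hence g1: "\<forall>j\<in>{..<k}. g j \<in> Vs ?n M" and g2: "g \<in> extensional {..<k}"
      and g3: "\<forall>j<k. M dvd dotp ?n w (g j)" unfolding P_def PiE_iff by simp_all
    have "\<forall>j\<in>{..<k}. g j \<in> Kset ?n M w" unfolding Kset_def using g1 g3 by simp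
    thus "g \<in> PiE {..<k} (\<lambda>_. Kset ?n M w)" using g2 unfolding PiE_iff by simp
  next
    fix g assume "g \<in> PiE {..<k} (\<lambda>_. Kset ?n M w)"
    hence g1: "\<forall>j\<in>{..<k}. g j \<in> Kset ?n M w" and g2: "g \<in> extensional {..<k}"
      unfolding PiE_iff by simp_all
    have "\<forall>j\<in>{..<k}. g j \<in> Vs ?n M" "\<forall>j<k. M dvd dotp ?n w (g j)"
      using g1 unfolding Kset_def by simp_all
    thus "g \<in> {g\<in>P. \<forall>j<k. M dvd dotp ?n w (g j)}" using g2 unfolding P_def PiE_iff by simp
  qed
  also have "card (PiE {..<k} (\<lambda>_. Kset ?n M w)) = card (Kset ?n M w) ^ k"
    by (simp add: card_PiE)
  also have "real_of_int B * real (card (Kset ?n M w) ^ k) \<le> real_of_int B * real_of_int B ^ k"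
  proof (rule mult_left_mono)
    have "int (card (Kset ?n M w)) \<le> B" unfolding B_def Gw_def by (rule card_Kset[OF M])
    hence "real (card (Kset ?n M w)) \<le> real_of_int B" by linarith
    thus "real (card (Kset ?n M w) ^ k) \<le> real_of_int B ^ k" by (simp add: power_mono)
  qed (use B0 in simp)
  also have "\<dots> = real_of_int (B ^ Suc k)" by simp
  finally show ?thesis unfolding h_def B_def Gw_def w_def .
qed


definition wpp :: "nat \<Rightarrow> (nat \<Rightarrow> nat \<Rightarrow> int) \<Rightarrow> (nat \<Rightarrow> int) \<Rightarrow> nat \<Rightarrow> int" where
  "wpp k B t i = B i k + (\<Sum>j<k. t j * B i j)"

lemma tcon_induct:
  fixes B :: "nat \<Rightarrow> nat \<Rightarrow> int"
  assumes fin: "finite Q"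
    and qprop: "\<And>q. q \<in> Q \<Longrightarrow> prime q \<and> (\<exists>i<Suc k. \<exists>j<Suc k. \<not> q dvd B i j)"
  shows "\<exists>t. \<forall>q\<in>Q. \<exists>i<Suc k. \<not> q dvd wpp k B t i"
  using fin qprop
proof (induction Q rule: finite_induct)
  case empty thus ?case by simp
next
  case (insert q Q0)
  from insert.IH insert.prems obtain t where t: "\<forall>p\<in>Q0. \<exists>i<Suc k. \<not> p dvd wpp k B t i" by auto
  have q: "prime q" and qB: "\<exists>i<Suc k. \<exists>j<Suc k. \<not> q dvd B i j" using insert.prems by auto
  have Q0p: "prime p" if "p \<in> Q0" for p using insert.prems that by auto
  show ?case
  proof (cases "\<exists>i<Suc k. \<not> q dvd wpp k B t i")
    case True thus ?thesis using t by auto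
  next
    case False
    hence qw: "\<forall>i<Suc k. q dvd wpp k B t i" by auto
    obtain j0 i0 where j0: "j0 < k" and i0: "i0 < Suc k" and nq: "\<not> q dvd B i0 j0"
    proof -
      have "\<exists>j<k. \<exists>i<Suc k. \<not> q dvd B i j"
      proof (rule ccontr)
        assume "\<not> (\<exists>j<k. \<exists>i<Suc k. \<not> q dvd B i j)"
        hence all: "\<forall>j<k. \<forall>i<Suc k. q dvd B i j" by auto
        have "q dvd B i j" if "i < Suc k" "j < Suc k" for i j
        proof (cases "j < k")
          case True thus ?thesis using all that by auto
        next
          case False
          hence jk: "j = k" using that by simp
          have "q dvd (\<Sum>j<k. t j * B i j)" by (rule dvd_sum) (use all that in auto)
          moreover have "q dvd wpp k B t i" using qw that by auto
          ultimately have "q dvd wpp k B t i - (\<Sum>j<k. t j * B i j)" by (rule dvd_diff[rotated])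
          thus ?thesis unfolding wpp_def jk by simp
        qed
        thus False using qB by auto
      qed
      thus ?thesis using that by auto
    qed
    define P0 where "P0 = (\<Prod>p\<in>Q0. p)"
    define t' where "t' = t(j0 := t j0 + P0)"
    have w': "wpp k B t' i = wpp k B t i + P0 * B i j0" for i
    proof -
      have "(\<Sum>j<k. t' j * B i j) = (\<Sum>j<k. t j * B i j) + P0 * B i j0"
      proof -
        have "(\<Sum>j<k. t' j * B i j) = (\<Sum>j<k. t j * B i j + (if j = j0 then P0 * B i j else 0))"
          unfolding t'_def by (intro sum.cong refl) (auto simp: algebra_simps)
        also have "\<dots> = (\<Sum>j<k. t j * B i j) + P0 * B i j0"
          using j0 by (simp add: sum.distrib)
        finally show ?thesis .
      qed
      thus ?thesis unfolding wpp_def by simp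
    qed
    have nqP0: "\<not> q dvd P0"
    proof
      assume "q dvd P0"
      then obtain p where p: "p \<in> Q0" "q dvd p" unfolding P0_def
        using prime_dvd_prod_iff[OF insert.hyps(1) q] by auto
      hence "q = p" using Q0p[OF p(1)] q by (simp add: primes_dvd_imp_eq)
      thus False using p(1) insert.hyps(2) by simp
    qed
    have "\<forall>p\<in>insert q Q0. \<exists>i<Suc k. \<not> p dvd wpp k B t' i"
    proof
      fix p assume "p \<in> insert q Q0"
      show "\<exists>i<Suc k. \<not> p dvd wpp k B t' i"
      proof (cases "p = q")
        case True
        have "\<not> q dvd P0 * B i0 j0" using nqP0 nq q by (simp add: prime_dvd_mult_iff)
        moreover have "q dvd wpp k B t i0" using qw i0 by auto
        ultimately have "\<not> q dvd wpp k B t i0 + P0 * B i0 j0" using dvd_add_right_iff by blast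
        thus ?thesis using True i0 w' by auto
      next
        case False
        hence pQ: "p \<in> Q0" using \<open>p \<in> insert q Q0\<close> by simp
        then obtain i where i: "i < Suc k" "\<not> p dvd wpp k B t i" using t by auto
        have "p dvd P0" unfolding P0_def using dvd_prodI[OF insert.hyps(1) pQ, of "\<lambda>x. x"] by simp
        hence "p dvd P0 * B i j0" by simp
        hence "\<not> p dvd wpp k B t i + P0 * B i j0" using i(2) dvd_add_left_iff by blast
        thus ?thesis using i(1) w' by auto
      qed
    qed
    thus ?thesis by blast
  qed
qed


lemma exists_t:
  fixes M :: int and A :: "int mat"
  assumes M: "M > 0"
  shows "\<exists>t. Gcd (insert M (wv k A t ` {..<Suc k})) = gcd_form (Suc k) A M"
proof -
  let ?n = "Suc k"
  define S where "S = {A $$ (i,j) | i j. i < ?n \<and> j < ?n}"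
  define Gf where "Gf = gcd_form ?n A M"
  have Gf_def': "Gf = Gcd (insert M S)" unfolding Gf_def gcd_form_def S_def by simp
  have GfM: "Gf dvd M" unfolding Gf_def' by (rule Gcd_dvd) simp
  have GfA: "Gf dvd A $$ (i,j)" if "i < ?n" "j < ?n" for i j
    unfolding Gf_def' by (rule Gcd_dvd) (use that in \<open>auto simp: S_def\<close>)
  have Gf0: "Gf > 0"
  proof -
    have "Gf \<noteq> 0" using GfM M by auto
    moreover have "Gf \<ge> 0" unfolding Gf_def' by simp
    ultimately show ?thesis by simp
  qed
  define B where "B i j = A $$ (i,j) div Gf" for i j
  have AB: "A $$ (i,j) = Gf * B i j" if "i < ?n" "j < ?n" for i j
    unfolding B_def using GfA[OF that] by simp
  define K where "K = M div Gf"
  have MK: "M = Gf * K" unfolding K_def using GfM by simp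
  have K0: "K > 0" using MK M Gf0 by (simp add: zero_less_mult_iff)
  define Q where "Q = prime_factors K"
  have qprop: "prime q \<and> (\<exists>i<?n. \<exists>j<?n. \<not> q dvd B i j)" if q: "q \<in> Q" for q
  proof -
    have qp: "prime q" and qK: "q dvd K" using q K0 unfolding Q_def in_prime_factors_iff by auto
    have "\<exists>i<?n. \<exists>j<?n. \<not> q dvd B i j"
    proof (rule ccontr)
      assume "\<not> (\<exists>i<?n. \<exists>j<?n. \<not> q dvd B i j)"
      hence all: "q dvd B i j" if "i < ?n" "j < ?n" for i j using that by auto
      have "q * Gf dvd Gcd (insert M S)"
      proof (rule Gcd_greatest)
        fix x assume "x \<in> insert M S"
        then consider "x = M" | i j where "x = A $$ (i,j)" "i < ?n" "j < ?n" unfolding S_def by auto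
        thus "q * Gf dvd x"
        proof cases
          case 1 thus ?thesis using qK MK by (simp add: mult.commute mult_dvd_mono)
        next
          case 2 thus ?thesis using all[OF 2(2,3)] AB[OF 2(2,3)] by (simp add: mult.commute mult_dvd_mono)
        qed
      qed
      hence "q * Gf dvd Gf" using Gf_def' by simp
      hence "q dvd 1" using dvd_times_right_cancel_iff[of Gf q 1] Gf0 by simp
      thus False using qp not_prime_unit by blast
    qed
    thus ?thesis using qp by simp
  qed
  have "finite Q" unfolding Q_def by simp
  from tcon_induct[OF this qprop] obtain t where t: "\<forall>q\<in>Q. \<exists>i<?n. \<not> q dvd wpp k B t i" by blast
  define h where "h = Gcd (insert K (wpp k B t ` {..<?n}))"
  have h1: "h = 1"
  proof -
    have hK: "h dvd K" unfolding h_def by (rule Gcd_dvd) simp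
    have hw: "h dvd wpp k B t i" if "i < ?n" for i unfolding h_def by (rule Gcd_dvd) (use that in simp)
    have h0: "h \<noteq> 0" using hK K0 by auto
    have "is_unit h"
    proof (rule ccontr)
      assume "\<not> is_unit h"
      then obtain q where q: "q dvd h" "prime q" using prime_divisor_exists[OF h0] by blast
      hence "q \<in> Q" unfolding Q_def in_prime_factors_iff using hK K0 dvd_trans by auto
      then obtain i where i: "i < ?n" "\<not> q dvd wpp k B t i" using t by blast
      thus False using q(1) hw[OF i(1)] dvd_trans by blast
    qed
    moreover have "h \<ge> 0" unfolding h_def by simp
    ultimately show ?thesis by simp
  qed
  have wv_eq: "wv k A t i = Gf * wpp k B t i" if "i < ?n" for i
  proof -
    have "(\<Sum>j<k. t j * A $$ (i,j)) = Gf * (\<Sum>j<k. t j * B i j)"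
      by (simp add: sum_distrib_left AB that algebra_simps)
    thus ?thesis unfolding wv_def wpp_def using AB[OF that, of k] by (simp add: algebra_simps)
  qed
  have "insert M (wv k A t ` {..<?n}) = (*) Gf ` insert K (wpp k B t ` {..<?n})"
    using MK wv_eq by (auto simp: image_image)
  hence "Gcd (insert M (wv k A t ` {..<?n})) = Gcd ((*) Gf ` insert K (wpp k B t ` {..<?n}))"
    by (simp only:)
  also have "\<dots> = normalize (Gf * h)"
    unfolding h_def by (rule Gcd_mult)
  also have "\<dots> = Gf" using h1 Gf0 by simp
  finally show ?thesis unfolding Gf_def by blast
qed


lemma sqf_dvd:
  fixes e d :: nat
  assumes sq: "squarefree e" and ed: "e dvd d * d"
  shows "e dvd d"
proof (cases "d = 0")
  case True thus ?thesis by simp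
next
  case False
  have e0: "e \<noteq> 0"
  proof
    assume "e = 0" thus False using sq by simp
  qed
  define g where "g = gcd e d"
  have g0: "g > 0" using False unfolding g_def by simp
  define u where "u = e div g"
  define v where "v = d div g"
  have eu: "e = g * u" unfolding u_def g_def by simp
  have dv: "d = g * v" unfolding v_def g_def by simp
  have cuv: "coprime u v" unfolding u_def v_def g_def using div_gcd_coprime[of e d] e0 by simp
  have "g * u dvd g * (g * (v * v))" using ed eu dv by (simp add: algebra_simps)
  hence "u dvd g * (v * v)" using g0 by simp
  moreover have "coprime u (v * v)" using cuv by simp
  ultimately have ug: "u dvd g" using coprime_dvd_mult_left_iff by blast
  have "u ^ 2 dvd e" unfolding eu power2_eq_square using ug by (simp add: mult.commute mult_dvd_mono)
  hence "u dvd 1" using squarefreeD[OF sq] by blast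
  hence "u = 1" by simp
  thus ?thesis using eu dv unfolding g_def by simp
qed

lemma final_arith:
  fixes D E F :: real and n :: nat
  assumes D: "D \<ge> 1" and E: "E \<ge> 1" and F: "F \<ge> 1" and EF: "E * F \<le> D" and n: "n \<ge> 1"
  shows "(D ^ (2 * (n - 1)) * E * F ^ 2) ^ n
    \<le> D powr (2 * real n ^ 2 - (real n + 3) / 2) * E * F powr ((real n + 3) / 2)"
proof -
  define a where "a = real n - 1"
  have a0: "a \<ge> 0" unfolding a_def using n by simp
  have D0: "D > 0" and E0: "E > 0" and F0: "F > 0" using D E F by auto
  have "(D ^ (2 * (n - 1)) * E * F ^ 2) ^ n = D ^ (2 * (n - 1) * n) * E ^ n * F ^ (2 * n)"
    by (simp add: power_mult_distrib power_mult[symmetric] mult.commute)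
  also have "\<dots> = D powr (2 * a * real n) * E powr (a + 1) * F powr (3 * a / 2 + (real n + 3) / 2)"
  proof -
    have "D ^ (2 * (n - 1) * n) = D powr real (2 * (n - 1) * n)" by (rule powr_realpow[OF D0, symmetric])
    also have "real (2 * (n - 1) * n) = 2 * a * real n" unfolding a_def using n by (simp add: of_nat_diff)
    finally have 1: "D ^ (2 * (n - 1) * n) = D powr (2 * a * real n)" .
    have "E ^ n = E powr real n" by (rule powr_realpow[OF E0, symmetric])
    hence 2: "E ^ n = E powr (a + 1)" unfolding a_def by simp
    have "F ^ (2 * n) = F powr real (2 * n)" by (rule powr_realpow[OF F0, symmetric])
    also have "real (2 * n) = 3 * a / 2 + (real n + 3) / 2" unfolding a_def by (simp add: field_simps)
    finally have 3: "F ^ (2 * n) = F powr (3 * a / 2 + (real n + 3) / 2)" .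
    show ?thesis using 1 2 3 by simp
  qed
  also have "\<dots> = D powr (2 * a * real n) * (E powr a * F powr (3 * a / 2)) * E * F powr ((real n + 3) / 2)"
    using E0 by (simp add: powr_add algebra_simps)
  also have "\<dots> \<le> D powr (2 * a * real n) * D powr (3 * a / 2) * E * F powr ((real n + 3) / 2)"
  proof -
    have "E powr a \<le> E powr (3 * a / 2)" using E a0 by (intro powr_mono) simp_all
    hence "E powr a * F powr (3 * a / 2) \<le> E powr (3 * a / 2) * F powr (3 * a / 2)"
      by (simp add: mult_right_mono)
    also have "\<dots> = (E * F) powr (3 * a / 2)" using E0 F0 by (simp add: powr_mult)
    also have "\<dots> \<le> D powr (3 * a / 2)" using EF E0 F0 a0 by (intro powr_mono2) simp_all
    finally have "E powr a * F powr (3 * a / 2) \<le> D powr (3 * a / 2)" .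
    thus ?thesis using E0 F0 D0 by (simp add: mult_left_mono mult_right_mono mult.assoc)
  qed
  also have "D powr (2 * a * real n) * D powr (3 * a / 2) = D powr (2 * real n ^ 2 - (real n + 3) / 2)"
  proof -
    have "2 * a * real n + 3 * a / 2 = 2 * real n ^ 2 - (real n + 3) / 2"
      unfolding a_def by (simp add: field_simps power2_eq_square)
    thus ?thesis unfolding powr_add[symmetric] by simp
  qed
  finally show ?thesis .
qed


lemma S_sum_eq:
  "S_sum n d A = (\<Sum>f \<in> Cs n (int d ^ 2). if det (mk n f) mod (int d ^ 2) = 0
      then Ee (int d ^ 2) (linform n A (mk n f)) else 0)"
proof -
  let ?M = "int d ^ 2"
  have fin: "finite (residue_matrices n ?M)" unfolding residue_mk by simp
  have "S_sum n d A = (\<Sum>X \<in> {X \<in> residue_matrices n ?M. det X mod ?M = 0}. Ee ?M (linform n A X))"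
    unfolding S_sum_def Ee_def by simp
  also have "\<dots> = (\<Sum>X \<in> residue_matrices n ?M. if det X mod ?M = 0 then Ee ?M (linform n A X) else 0)"
    by (rule sum.inter_filter[OF fin])
  also have "\<dots> = (\<Sum>X \<in> mk n ` Cs n ?M. if det X mod ?M = 0 then Ee ?M (linform n A X) else 0)"
    unfolding residue_mk ..
  also have "\<dots> = (\<Sum>f \<in> Cs n ?M. if det (mk n f) mod ?M = 0 then Ee ?M (linform n A (mk n f)) else 0)"
    by (subst sum.reindex[OF inj_mk]) simp
  finally show ?thesis .
qed

theorem lemma3p8:
  fixes n :: nat
  assumes "n \<ge> 1"
  shows "\<exists>g :: nat \<Rightarrow> real. (g \<longlonglongrightarrow> 0) \<and>
    (\<forall>d (A :: int mat) (e :: nat) (f :: nat).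
       d \<ge> 1 \<longrightarrow> squarefree d \<longrightarrow> A \<in> carrier_mat n n \<longrightarrow>
       e > 0 \<longrightarrow> f > 0 \<longrightarrow> squarefree e \<longrightarrow> squarefree f \<longrightarrow> coprime e f \<longrightarrow>
       gcd_form n A (int d ^ 2) = int (e * f ^ 2) \<longrightarrow>
       norm (S_sum n d A) \<le>
         real d powr (2 * real n ^ 2 - (real n + 3) / 2 + g d) * real e
           * real f powr ((real n + 3) / 2))"
proof -
  obtain k where nk: "n = Suc k" using assms by (cases n) auto
  show ?thesis
  proof (intro exI[of _ "\<lambda>_. 0"] conjI allI impI)
    show "(\<lambda>_. 0 :: real) \<longlonglongrightarrow> 0" by simp
    fix d :: nat and A :: "int mat" and e f :: nat
    assume d1: "d \<ge> 1" and sqd: "squarefree d" and A: "A \<in> carrier_mat n n"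
      and e0: "e > 0" and f0: "f > 0" and sqe: "squarefree e" and sqf: "squarefree f"
      and cef: "coprime e f" and G: "gcd_form n A (int d ^ 2) = int (e * f ^ 2)"
    define M where "M = int d ^ 2"
    have M0: "M > 0" unfolding M_def using d1 by simp
    obtain t where t: "Gcd (insert M (wv k A t ` {..<Suc k})) = gcd_form (Suc k) A M"
      using exists_t[OF M0] by blast
    have Gt: "Gcd (insert M (wv k A t ` {..<Suc k})) = int (e * f ^ 2)"
      using t G nk unfolding M_def by simp
    have c: "norm (\<Sum>f \<in> Cs (Suc k) M. if det (mk (Suc k) f) mod M = 0 then Ee M (linform (Suc k) A (mk (Suc k) f)) else 0)
      \<le> real_of_int ((M ^ k * Gcd (insert M (wv k A t ` {..<Suc k}))) ^ Suc k)"
      by (rule core[OF M0])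
    have "norm (S_sum n d A) \<le> real_of_int ((M ^ k * int (e * f ^ 2)) ^ Suc k)"
      using c unfolding S_sum_eq nk M_def[symmetric] by (simp only: Gt)
    also have "\<dots> = (real d ^ (2 * (n - 1)) * real e * real f ^ 2) ^ n"
      unfolding M_def nk by (simp add: power_mult mult.assoc)
    also have "\<dots> \<le> real d powr (2 * real n ^ 2 - (real n + 3) / 2) * real e * real f powr ((real n + 3) / 2)"
    proof (rule final_arith)
      have "gcd_form n A (int d ^ 2) dvd int d ^ 2" unfolding gcd_form_def by (rule Gcd_dvd) simp
      hence "int (e * f ^ 2) dvd int (d ^ 2)" using G by simp
      hence efd: "e * f ^ 2 dvd d ^ 2" by (simp only: int_dvd_int_iff)
      have "e dvd d * d" using efd by (simp add: power2_eq_square dvd_mult_left)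
      hence ed: "e dvd d" by (rule sqf_dvd[OF sqe])
      have "f dvd e * f ^ 2" by (simp add: power2_eq_square)
      hence "f dvd d ^ 2" using efd by (rule dvd_trans)
      hence "f dvd d * d" by (simp add: power2_eq_square)
      hence fd: "f dvd d" by (rule sqf_dvd[OF sqf])
      have "e * f dvd d" by (rule divides_mult[OF ed fd cef])
      hence "e * f \<le> d" using d1 by (simp add: dvd_imp_le)
      thus "real e * real f \<le> real d" by (simp flip: of_nat_mult)
    qed (use d1 e0 f0 assms in simp_all)
    finally show "norm (S_sum n d A) \<le> real d powr (2 * real n ^ 2 - (real n + 3) / 2 + 0) * real e
           * real f powr ((real n + 3) / 2)" by simp
  qed
qed

end
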